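(* Let $\Phi$ be the standard normal CDF and $\eta_0:=2(1-\Phi(\sqrt{2\log 2}))\approx 0.239$. Let $0<\epsilon<0.2$, let $X\in\mathbb{R}^{m\times n}$ have i.i.d. $N(0,1)$ entries with $m\gtrsim\frac{n}{\epsilon^2}$, let $w^*\in\mathbb{R}^n$ be a fixed nonzero vector, and consider observations $y=Xw^*+\zeta+d$ with $\|\zeta\|_0\leq\eta m$, and the $\ell_1$ regression estimator $\widehat{w}\in\operatorname{argmin}_{w\in\mathbb{R}^n}\|y-Xw\|_1$. Then with high probability over $X$: 1. If $\eta>\eta_0+\epsilon$ and $d=0$, there exists a choice of $\zeta$ with $\|\zeta\|_0\leq\eta m$ such that $\ell_1$ regression does not return $w^*$ (i.e. $w^*$ is not a minimizer of $\|y-Xw\|_1$). 2. Even if $\zeta=0$, there exists a choice of $d$ such that $\widehat{w}$ satisfies $\|\widehat{w}-w^*\|_2\gtrsim\frac{\|d\|_1}{m}$.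
   Context: $\|\zeta\|_0$ denotes the number of nonzero entries of $\zeta$. The relations $\gtrsim$ mean inequalities holding up to absolute constant factors. *)

theory Defs
  imports "HOL-Probability.Probability"
begin

definition std_gauss :: "real measure" where
  "std_gauss = density lborel std_normal_density"

definition Phi :: "real \<Rightarrow> real" where
  "Phi t = measure std_gauss {..t}"

definition eta0 :: real where
  "eta0 = 2 * (1 - Phi (sqrt (2 * ln 2)))"

definition gauss_matrix :: "nat \<Rightarrow> nat \<Rightarrow> (nat \<times> nat \<Rightarrow> real) measure" where
  "gauss_matrix m n = PiM ({..<m} \<times> {..<n}) (\<lambda>_. std_gauss)"

text \<open>Vectors in R^k are functions nat => real, only indices < k matter.\<close>
definition l1norm :: "nat \<Rightarrow> (nat \<Rightarrow> real) \<Rightarrow> real" where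
  "l1norm k v = (\<Sum>i<k. \<bar>v i\<bar>)"

definition l2norm :: "nat \<Rightarrow> (nat \<Rightarrow> real) \<Rightarrow> real" where
  "l2norm k v = sqrt (\<Sum>i<k. (v i)\<^sup>2)"

definition l0norm :: "nat \<Rightarrow> (nat \<Rightarrow> real) \<Rightarrow> nat" where
  "l0norm k v = card {i. i < k \<and> v i \<noteq> 0}"

definition matvec :: "nat \<Rightarrow> (nat \<times> nat \<Rightarrow> real) \<Rightarrow> (nat \<Rightarrow> real) \<Rightarrow> (nat \<Rightarrow> real)" where
  "matvec n X w = (\<lambda>i. \<Sum>j<n. X (i, j) * w j)"

definition l1_obj :: "nat \<Rightarrow> nat \<Rightarrow> (nat \<times> nat \<Rightarrow> real) \<Rightarrow> (nat \<Rightarrow> real) \<Rightarrow> (nat \<Rightarrow> real) \<Rightarrow> real" where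
  "l1_obj m n X y w = l1norm m (\<lambda>i. y i - matvec n X w i)"

definition is_l1_minimizer :: "nat \<Rightarrow> nat \<Rightarrow> (nat \<times> nat \<Rightarrow> real) \<Rightarrow> (nat \<Rightarrow> real) \<Rightarrow> (nat \<Rightarrow> real) \<Rightarrow> bool" where
  "is_l1_minimizer m n X y w \<longleftrightarrow> (\<forall>v. l1_obj m n X y w \<le> l1_obj m n X y v)"

end

theory Submission
  imports Defs
begin


lemma G_prob: "prob_space std_gauss"
  unfolding std_gauss_def proof qed (simp add: emeasure_density nn_integral_eq_integral)

interpretation G: prob_space std_gauss by (rule G_prob)

lemma space_G[simp]: "space std_gauss = UNIV"
  unfolding std_gauss_def by simp
lemma sets_G[simp]: "sets std_gauss = sets borel"
  unfolding std_gauss_def by simp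

lemma int_G: "f \<in> borel_measurable borel \<Longrightarrow>
   integral\<^sup>L std_gauss f = (\<integral>x. std_normal_density x * f x \<partial>lborel)"
  unfolding std_gauss_def by (subst integral_density) auto

lemma integrable_G: "f \<in> borel_measurable borel \<Longrightarrow>
   integrable std_gauss f \<longleftrightarrow> integrable lborel (\<lambda>x. std_normal_density x * f x)"
  unfolding std_gauss_def by (subst integrable_density) auto

lemma M_prob: "prob_space (gauss_matrix m n)"
  unfolding gauss_matrix_def by (rule prob_space_PiM) (rule G_prob)

interpretation GP: product_sigma_finite "\<lambda>_::nat\<times>nat. std_gauss"
  unfolding product_sigma_finite_def using G_prob prob_space_imp_sigma_finite by blast

lemma prodint:
  fixes F :: "nat\<times>nat \<Rightarrow> real \<Rightarrow> real"
  assumes "finite J" "J \<subseteq> {..<m}\<times>{..<n}" "\<And>a. a\<in>J \<Longrightarrow> integrable std_gauss (F a)"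
  shows "(\<integral>X. (\<Prod>a\<in>J. F a (X a)) \<partial>gauss_matrix m n) = (\<Prod>a\<in>J. integral\<^sup>L std_gauss (F a))"
proof -
  let ?I = "{..<m}\<times>{..<n}"
  define f where "f a = (if a \<in> J then F a else (\<lambda>_. 1::real))" for a
  have fi: "integrable std_gauss (f a)" for a
    using assms(3) G.integrable_const by (auto simp: f_def)
  have "(\<integral>X. (\<Prod>a\<in>?I. f a (X a)) \<partial>gauss_matrix m n) = (\<Prod>a\<in>?I. integral\<^sup>L std_gauss (f a))"
    unfolding gauss_matrix_def by (rule GP.product_integral_prod) (auto intro: fi)
  moreover have "(\<Prod>a\<in>?I. f a (X a)) = (\<Prod>a\<in>J. F a (X a))" for X
  proof -
    have "(\<Prod>a\<in>?I. f a (X a)) = (\<Prod>a\<in>?I. if a \<in> J then F a (X a) else 1)"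
      by (auto simp: f_def intro!: prod.cong)
    also have "\<dots> = (\<Prod>a\<in>?I \<inter> J. F a (X a))" by (rule prod.inter_restrict[symmetric]) simp
    also have "?I \<inter> J = J" using assms(2) by auto
    finally show ?thesis .
  qed
  moreover have "(\<Prod>a\<in>?I. integral\<^sup>L std_gauss (f a)) = (\<Prod>a\<in>J. integral\<^sup>L std_gauss (F a))"
  proof -
    have "(\<Prod>a\<in>?I. integral\<^sup>L std_gauss (f a)) = (\<Prod>a\<in>?I. if a \<in> J then integral\<^sup>L std_gauss (F a) else 1)"
      using G.prob_space by (auto simp: f_def intro!: prod.cong)
    also have "\<dots> = (\<Prod>a\<in>?I \<inter> J. integral\<^sup>L std_gauss (F a))" by (rule prod.inter_restrict[symmetric]) simp
    also have "?I \<inter> J = J" using assms(2) by auto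
    finally show ?thesis .
  qed
  ultimately show ?thesis by simp
qed

lemma prodintegrable:
  fixes F :: "nat\<times>nat \<Rightarrow> real \<Rightarrow> real"
  assumes "finite J" "J \<subseteq> {..<m}\<times>{..<n}" "\<And>a. a\<in>J \<Longrightarrow> integrable std_gauss (F a)"
  shows "integrable (gauss_matrix m n) (\<lambda>X. \<Prod>a\<in>J. F a (X a))"
proof -
  let ?I = "{..<m}\<times>{..<n}"
  define f where "f a = (if a \<in> J then F a else (\<lambda>_. 1::real))" for a
  have fi: "integrable std_gauss (f a)" for a
    using assms(3) G.integrable_const by (auto simp: f_def)
  have "integrable (gauss_matrix m n) (\<lambda>X. \<Prod>a\<in>?I. f a (X a))"
    unfolding gauss_matrix_def by (rule GP.product_integrable_prod) (auto intro: fi)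
  moreover have "(\<Prod>a\<in>?I. f a (X a)) = (\<Prod>a\<in>J. F a (X a))" for X
  proof -
    have "(\<Prod>a\<in>?I. f a (X a)) = (\<Prod>a\<in>?I. if a \<in> J then F a (X a) else 1)"
      by (auto simp: f_def intro!: prod.cong)
    also have "\<dots> = (\<Prod>a\<in>?I \<inter> J. F a (X a))" by (rule prod.inter_restrict[symmetric]) simp
    also have "?I \<inter> J = J" using assms(2) by auto
    finally show ?thesis .
  qed
  ultimately show ?thesis by simp
qed

lemma colsum:
  fixes h :: "real \<Rightarrow> real"
  assumes hm: "h \<in> borel_measurable borel" and hi: "integrable std_gauss h"
    and h2: "integrable std_gauss (\<lambda>x. (h x)\<^sup>2)" and j: "j < n" and a: "a > 0"
  shows "measure (gauss_matrix m n) {X \<in> space (gauss_matrix m n).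
            a \<le> \<bar>(\<Sum>i<m. h (X (i,j))) - real m * integral\<^sup>L std_gauss h\<bar>}
         \<le> real m * integral\<^sup>L std_gauss (\<lambda>x. (h x)\<^sup>2) / a\<^sup>2"
proof -
  interpret M: prob_space "gauss_matrix m n" by (rule M_prob)
  define \<mu> where "\<mu> = integral\<^sup>L std_gauss h"
  define \<nu> where "\<nu> = integral\<^sup>L std_gauss (\<lambda>x. (h x)\<^sup>2)"
  define S where "S X = (\<Sum>i<m. h (X (i,j)))" for X :: "nat\<times>nat \<Rightarrow> real"
  have h2': "integrable std_gauss (\<lambda>x. h x * h x)" using h2 by (simp add: power2_eq_square)
  have single_i: "integrable (gauss_matrix m n) (\<lambda>X. h (X (i,j)))" if "i < m" for i
    using prodintegrable[of "{(i,j)}" m n "\<lambda>_. h"] that j hi by simp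
  have single: "M.expectation (\<lambda>X. h (X (i,j))) = \<mu>" if "i < m" for i
    using prodint[of "{(i,j)}" m n "\<lambda>_. h"] that j hi by (simp add: \<mu>_def)
  have pair_i: "integrable (gauss_matrix m n) (\<lambda>X. h (X (i,j)) * h (X (k,j)))" if "i < m" "k < m" for i k
  proof (cases "i = k")
    case True
    then show ?thesis using prodintegrable[of "{(i,j)}" m n "\<lambda>_ x. h x * h x"] that j h2' by simp
  next
    case False
    then show ?thesis using prodintegrable[of "{(i,j),(k,j)}" m n "\<lambda>_. h"] that j hi by simp
  qed
  have pair: "M.expectation (\<lambda>X. h (X (i,j)) * h (X (k,j))) = (if i = k then \<nu> else \<mu>\<^sup>2)"
    if "i < m" "k < m" for i k
  proof (cases "i = k")
    case True
    then show ?thesis using prodint[of "{(i,j)}" m n "\<lambda>_ x. h x * h x"] that j h2'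
      by (simp add: \<nu>_def power2_eq_square)
  next
    case False
    then show ?thesis using prodint[of "{(i,j),(k,j)}" m n "\<lambda>_. h"] that j hi
      by (simp add: \<mu>_def power2_eq_square)
  qed
  have intS: "integrable (gauss_matrix m n) S"
    unfolding S_def by (rule Bochner_Integration.integrable_sum) (auto intro: single_i)
  have sq: "(S X)\<^sup>2 = (\<Sum>i<m. \<Sum>k<m. h (X (i,j)) * h (X (k,j)))" for X
    unfolding S_def power2_eq_square sum_product by simp
  have intS2: "integrable (gauss_matrix m n) (\<lambda>X. (S X)\<^sup>2)"
    unfolding sq by (intro Bochner_Integration.integrable_sum pair_i) auto
  have ES: "M.expectation S = real m * \<mu>"
    unfolding S_def by (subst Bochner_Integration.integral_sum) (auto intro: single_i simp: single)
  have inner: "(\<Sum>k<m. (if i = k then \<nu> else \<mu>\<^sup>2)) = \<nu> + (real m - 1) * \<mu>\<^sup>2" if "i < m" for i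
  proof -
    have "(\<Sum>k<m. (if i = k then \<nu> else \<mu>\<^sup>2)) = (\<Sum>k<m. \<mu>\<^sup>2 + (if i = k then \<nu> - \<mu>\<^sup>2 else 0))"
      by (intro sum.cong) auto
    also have "\<dots> = real m * \<mu>\<^sup>2 + (\<nu> - \<mu>\<^sup>2)"
      using that by (simp add: sum.distrib)
    finally show ?thesis by (simp add: algebra_simps)
  qed
  have ES2: "M.expectation (\<lambda>X. (S X)\<^sup>2) = real m * (\<nu> + (real m - 1) * \<mu>\<^sup>2)"
  proof -
    have "M.expectation (\<lambda>X. (S X)\<^sup>2) = (\<Sum>i<m. \<Sum>k<m. M.expectation (\<lambda>X. h (X (i,j)) * h (X (k,j))))"
    proof -
      have "M.expectation (\<lambda>X. (S X)\<^sup>2) = (\<Sum>i<m. M.expectation (\<lambda>X. \<Sum>k<m. h (X (i,j)) * h (X (k,j))))"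
        unfolding sq by (rule Bochner_Integration.integral_sum) (auto intro!: Bochner_Integration.integrable_sum pair_i)
      also have "\<dots> = (\<Sum>i<m. \<Sum>k<m. M.expectation (\<lambda>X. h (X (i,j)) * h (X (k,j))))"
        by (intro sum.cong refl Bochner_Integration.integral_sum) (auto intro: pair_i)
      finally show ?thesis .
    qed
    also have "\<dots> = (\<Sum>i<m. \<Sum>k<m. (if i = k then \<nu> else \<mu>\<^sup>2))"
      by (intro sum.cong refl) (simp add: pair)
    also have "\<dots> = (\<Sum>i<m. \<nu> + (real m - 1) * \<mu>\<^sup>2)"
      by (intro sum.cong refl) (simp add: inner)
    finally show ?thesis by simp
  qed
  have var: "M.variance S \<le> real m * \<nu>"
  proof -
    have "M.variance S = M.expectation (\<lambda>X. (S X)\<^sup>2) - (M.expectation S)\<^sup>2"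
      by (rule M.variance_eq[OF intS intS2])
    also have "\<dots> = real m * \<nu> - real m * \<mu>\<^sup>2"
      unfolding ES ES2 by (simp add: algebra_simps power2_eq_square)
    also have "\<dots> \<le> real m * \<nu>" by simp
    finally show ?thesis .
  qed
  have "measure (gauss_matrix m n) {X \<in> space (gauss_matrix m n). a \<le> \<bar>S X - M.expectation S\<bar>} \<le> M.variance S / a\<^sup>2"
    by (rule M.Chebyshev_inequality) (use intS intS2 a in auto)
  also have "\<dots> \<le> real m * \<nu> / a\<^sup>2"
    using var a by (simp add: divide_right_mono)
  finally show ?thesis unfolding ES S_def \<mu>_def \<nu>_def .
qed



abbreviation "phi \<equiv> std_normal_density"

lemma phi_eq: "phi x = exp (- x\<^sup>2 / 2) / sqrt (2 * pi)"
  by (simp add: std_normal_density_def)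

lemma phi_le: "phi x \<le> phi 0"
  unfolding phi_eq by (intro divide_right_mono) auto

lemma phi_neg: "phi (-x) = phi x" unfolding phi_eq by simp

lemma dphi: "(phi has_real_derivative (- x * phi x)) (at x)"
proof -
  have "((\<lambda>x. exp (- x\<^sup>2 / 2) / sqrt (2 * pi)) has_real_derivative (- x * (exp (- x\<^sup>2 / 2) / sqrt (2 * pi)))) (at x)"
    by (auto intro!: derivative_eq_intros simp: field_simps)
  moreover have "phi = (\<lambda>x. exp (- x\<^sup>2 / 2) / sqrt (2 * pi))" using phi_eq by auto
  ultimately show ?thesis by (simp add: phi_eq)
qed

lemma mom1: "integrable std_gauss (\<lambda>x. x)" "integral\<^sup>L std_gauss (\<lambda>x. x) = 0"
  using std_normal_moment_odd[of 0] by (auto simp: integrable_G int_G has_bochner_integral_iff)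

lemma mom2: "integrable std_gauss (\<lambda>x. x\<^sup>2)" "integral\<^sup>L std_gauss (\<lambda>x. x\<^sup>2) = 1"
  using std_normal_moment_even[of 1] by (auto simp: integrable_G int_G has_bochner_integral_iff)

lemma mom4: "integrable std_gauss (\<lambda>x. (x\<^sup>2)\<^sup>2)" "integral\<^sup>L std_gauss (\<lambda>x. (x\<^sup>2)\<^sup>2) = 3"
proof -
  have "has_bochner_integral lborel (\<lambda>x. phi x * x ^ 4) 3"
    using std_normal_moment_even[of 2] by (simp add: fact_numeral)
  then show "integrable std_gauss (\<lambda>x. (x\<^sup>2)\<^sup>2)" "integral\<^sup>L std_gauss (\<lambda>x. (x\<^sup>2)\<^sup>2) = 3"
    by (auto simp: integrable_G int_G has_bochner_integral_iff simp flip: power_mult)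
qed

lemma momabs: "integrable std_gauss (\<lambda>x. \<bar>x\<bar>)" "integral\<^sup>L std_gauss (\<lambda>x. \<bar>x\<bar>) = sqrt (2/pi)"
  using std_normal_moment_abs_odd[of 0] by (auto simp: integrable_G int_G has_bochner_integral_iff)

lemma measG: assumes "A \<in> sets borel" shows "measure std_gauss A = (\<integral>x. phi x * indicator A x \<partial>lborel)"
proof -
  have "(integral\<^sup>L std_gauss (indicator A) :: real) = measure std_gauss A" by simp
  moreover have "(integral\<^sup>L std_gauss (indicator A) :: real) = (\<integral>x. phi x * indicator A x \<partial>lborel)"
    using assms by (intro int_G) auto
  ultimately show ?thesis by simp
qed

lemma lborel_refl: fixes g :: "real \<Rightarrow> real" shows "g \<in> borel_measurable borel \<Longrightarrow> (\<integral>x. g (- x) \<partial>lborel) = (\<integral>x. g x \<partial>lborel)"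
  using integral_distr[of uminus lborel borel g] by (simp add: lborel_distr_uminus)

lemma sym_tail: "measure std_gauss {..< -t} = measure std_gauss {t<..}"
proof -
  have "measure std_gauss {..< -t} = (\<integral>x. phi (-x) * indicator {..< -t} (-x) \<partial>lborel)"
    by (subst lborel_refl) (auto simp: measG)
  also have "\<dots> = (\<integral>x. phi x * indicator {t<..} x \<partial>lborel)"
    by (intro Bochner_Integration.integral_cong) (auto simp: phi_neg indicator_def)
  finally show ?thesis by (simp add: measG)
qed

lemma interval_bound:
  assumes "t \<le> s"
  shows "measure std_gauss {t<..s} \<le> (s - t) * phi 0"
proof -
  have "measure std_gauss {t<..s} = (\<integral>x. phi x * indicator {t<..s} x \<partial>lborel)" by (simp add: measG)
  also have "\<dots> \<le> (\<integral>x. phi 0 * indicator {t<..s} x \<partial>lborel)"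
  proof (rule integral_mono)
    show "integrable lborel (\<lambda>x. phi x * indicator {t<..s} x)"
      by (rule integrable_real_mult_indicator) auto
    show "integrable lborel (\<lambda>x. phi 0 * indicator {t<..s} x)"
      using assms by (intro integrable_mult_right integrable_real_indicator) (auto simp: emeasure_lborel_Ioc)
    show "phi x * indicator {t<..s} x \<le> phi 0 * indicator {t<..s} x" for x
      using phi_le[of x] by (auto simp: indicator_def)
  qed
  also have "\<dots> = (s - t) * phi 0"
    using assms by (simp add: measure_lborel_Ioc)
  finally show ?thesis .
qed

lemma tail_bound:
  assumes "0 \<le> t" "t \<le> s"
  shows "measure std_gauss {x. t < \<bar>x\<bar>} \<le> 2 * (1 - Phi s) + 2 * (s - t) * phi 0"
proof -
  have e1: "{x. t < \<bar>x\<bar>} = {t<..} \<union> {..< -t}" by auto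
  have "measure std_gauss {x. t < \<bar>x\<bar>} = measure std_gauss {t<..} + measure std_gauss {..< -t}"
    unfolding e1 using assms by (intro G.finite_measure_Union) auto
  also have "\<dots> = 2 * measure std_gauss {t<..}" by (simp add: sym_tail)
  also have "{t<..} = {t<..s} \<union> {s<..}" using assms by auto
  also have "measure std_gauss ({t<..s} \<union> {s<..}) = measure std_gauss {t<..s} + measure std_gauss {s<..}"
    by (intro G.finite_measure_Union) auto
  also have "measure std_gauss {s<..} = 1 - Phi s"
  proof -
    have "measure std_gauss (space std_gauss - {..s}) = 1 - measure std_gauss {..s}"
      by (rule G.prob_compl) auto
    moreover have "space std_gauss - {..s} = {s<..}" by auto
    ultimately show ?thesis by (simp add: Phi_def)
  qed
  finally have eq: "measure std_gauss {x. t < \<bar>x\<bar>} = 2 * (measure std_gauss {t<..s} + (1 - Phi s))" .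
  have "measure std_gauss {t<..s} \<le> (s - t) * phi 0" by (rule interval_bound[OF assms(2)])
  then show ?thesis unfolding eq by (simp add: algebra_simps)
qed

lemma isCont_phiabs: "isCont (\<lambda>x. phi x * \<bar>x\<bar>) x"
  unfolding phi_eq by (intro continuous_intros) auto

lemma cont_phiabs: "continuous_on S (\<lambda>x. phi x * \<bar>x\<bar>)"
  using isCont_phiabs by (simp add: continuous_at_imp_continuous_on)

lemma lbint_abs:
  assumes "0 \<le> t"
  shows "(LBINT x=-t..t. phi x * \<bar>x\<bar>) = 2 * (phi 0 - phi t)"
proof -
  have i1: "(LBINT x=-t..(0::real). phi x * \<bar>x\<bar>) = phi 0 - phi (-t)"
  proof (rule interval_integral_FTC_finite[where F=phi])
    show "continuous_on {min (- t) 0..max (- t) 0} (\<lambda>x. phi x * \<bar>x\<bar>)" by (rule cont_phiabs)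
    fix x assume "min (- t) 0 \<le> x" "x \<le> max (- t) 0"
    then have "x \<le> 0" using assms by auto
    then have "(phi has_real_derivative (phi x * \<bar>x\<bar>)) (at x)" using dphi[of x] by (simp add: mult.commute)
    then show "(phi has_vector_derivative phi x * \<bar>x\<bar>) (at x within {min (- t) 0..max (- t) 0})"
      by (simp add: has_real_derivative_iff_has_vector_derivative[symmetric] has_field_derivative_at_within)
  qed
  have i2: "(LBINT x=(0::real)..t. phi x * \<bar>x\<bar>) = (- phi t) - (- phi 0)"
  proof (rule interval_integral_FTC_finite[where F="\<lambda>x. - phi x"])
    show "continuous_on {min 0 t..max 0 t} (\<lambda>x. phi x * \<bar>x\<bar>)" by (rule cont_phiabs)
    fix x assume "min 0 t \<le> x" "x \<le> max 0 t"
    then have "x \<ge> 0" using assms by auto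
    then have "((\<lambda>x. - phi x) has_real_derivative (phi x * \<bar>x\<bar>)) (at x)"
      using DERIV_minus[OF dphi[of x]] by (simp add: mult.commute)
    then show "((\<lambda>x. - phi x) has_vector_derivative phi x * \<bar>x\<bar>) (at x within {min 0 t..max 0 t})"
      by (simp add: has_real_derivative_iff_has_vector_derivative[symmetric] has_field_derivative_at_within)
  qed
  have "(LBINT x=-t..(0::real). phi x * \<bar>x\<bar>) + (LBINT x=(0::real)..t. phi x * \<bar>x\<bar>) = (LBINT x=-t..t. phi x * \<bar>x\<bar>)"
  proof (rule interval_integral_sum)
    have "interval_lebesgue_integrable lborel (ereal (-t)) (ereal t) (\<lambda>x. phi x * \<bar>x\<bar>)"
      by (intro interval_integrable_isCont isCont_phiabs)
    moreover have "min (ereal (-t)) (min (ereal 0) (ereal t)) = ereal (-t)" "max (ereal (-t)) (max (ereal 0) (ereal t)) = ereal t"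
      using assms by (auto simp: min_def max_def)
    ultimately show "interval_lebesgue_integrable lborel (min (ereal (-t)) (min (ereal 0) (ereal t))) (max (ereal (-t)) (max (ereal 0) (ereal t))) (\<lambda>x. phi x * \<bar>x\<bar>)"
      by simp
  qed
  then show ?thesis using i1 i2 by (simp add: phi_neg)
qed

lemma sqrt2pi: "sqrt (2 / pi) = 2 * phi 0"
proof -
  have "sqrt (2 / pi) * sqrt (2 * pi) = 2"
    by (simp add: real_sqrt_mult[symmetric])
  then show ?thesis unfolding phi_eq by (simp add: field_simps)
qed

definition ht :: "real \<Rightarrow> real \<Rightarrow> real" where
  "ht t x = (if t < \<bar>x\<bar> then \<bar>x\<bar> else - \<bar>x\<bar>)"

lemma ht_meas[measurable]: "ht t \<in> borel_measurable borel"
  unfolding ht_def by measurable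

lemma ht_alt: "ht t x = \<bar>x\<bar> - 2 * (\<bar>x\<bar> * indicator {-t..t} x)"
  by (auto simp: ht_def indicator_def)

lemma ht_int: "integrable std_gauss (ht t)"
proof -
  have "integrable std_gauss (\<lambda>x. \<bar>x\<bar> - 2 * (\<bar>x\<bar> * indicator {-t..t} x))"
    using momabs(1) by (intro Bochner_Integration.integrable_diff integrable_mult_right integrable_real_mult_indicator) auto
  then show ?thesis by (simp add: ht_alt[abs_def])
qed

lemma ht_sq: "(ht t x)\<^sup>2 = x\<^sup>2" by (simp add: ht_def)

lemma ht_mean:
  assumes "0 \<le> t"
  shows "integral\<^sup>L std_gauss (ht t) = 4 * phi t - 2 * phi 0"
proof -
  have ia: "integrable std_gauss (\<lambda>x. \<bar>x\<bar> * indicator {-t..t} x)"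
    using momabs(1) by (intro integrable_real_mult_indicator) auto
  have "integral\<^sup>L std_gauss (ht t) = integral\<^sup>L std_gauss (\<lambda>x. \<bar>x\<bar> - 2 * (\<bar>x\<bar> * indicator {-t..t} x))"
    by (simp add: ht_alt[abs_def])
  also have "\<dots> = sqrt (2/pi) - 2 * integral\<^sup>L std_gauss (\<lambda>x. \<bar>x\<bar> * indicator {-t..t} x)"
    using momabs ia by simp
  also have "integral\<^sup>L std_gauss (\<lambda>x. \<bar>x\<bar> * indicator {-t..t} x) = (LBINT x=-t..t. phi x * \<bar>x\<bar>)"
    using assms by (subst int_G) (auto simp: interval_integral_Icc set_lebesgue_integral_def indicator_def intro!: Bochner_Integration.integral_cong)
  finally show ?thesis using lbint_abs[OF assms] sqrt2pi by simp
qed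



lemma comp_meas[measurable]: "(\<lambda>X. X a) \<in> borel_measurable (gauss_matrix m n)"
proof (cases "a \<in> {..<m}\<times>{..<n}")
  case True
  have "(\<lambda>X. X a) \<in> gauss_matrix m n \<rightarrow>\<^sub>M std_gauss"
    unfolding gauss_matrix_def by (rule measurable_component_singleton[OF True])
  then show ?thesis by (simp add: measurable_cong_sets[OF refl sets_G])
next
  case False
  have "(\<lambda>X. undefined :: real) \<in> borel_measurable (gauss_matrix m n)" by simp
  moreover have "X a = undefined" if "X \<in> space (gauss_matrix m n)" for X
    using that False unfolding gauss_matrix_def by (cases a) (auto simp: space_PiM PiE_def extensional_def)
  ultimately show ?thesis by (metis (no_types, lifting) measurable_cong)
qed

lemma ev1:
  assumes "0 < n" "0 < e" "0 < m"
  shows "measure (gauss_matrix m n) {X \<in> space (gauss_matrix m n).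
      e * real m / 4 \<le> \<bar>(\<Sum>i<m. indicator {x. t < \<bar>x\<bar>} (X (i,0))) - real m * measure std_gauss {x. t < \<bar>x\<bar>}\<bar>}
    \<le> 16 / (e\<^sup>2 * real m)"
proof -
  let ?h = "indicator {x::real. t < \<bar>x\<bar>} :: real \<Rightarrow> real"
  have "emeasure std_gauss {x. t < \<bar>x\<bar>} < \<top>"
    using G.emeasure_finite[of "{x. t < \<bar>x\<bar>}"] top.not_eq_extremum by blast
  then have hi: "integrable std_gauss ?h" by (intro integrable_real_indicator) auto
  have "(\<lambda>x. (?h x)\<^sup>2) = ?h" by (auto simp: indicator_def fun_eq_iff)
  then have h2: "integrable std_gauss (\<lambda>x. (?h x)\<^sup>2)" using hi by simp
  have "measure (gauss_matrix m n) {X \<in> space (gauss_matrix m n).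
      e * real m / 4 \<le> \<bar>(\<Sum>i<m. ?h (X (i,0))) - real m * integral\<^sup>L std_gauss ?h\<bar>}
    \<le> real m * integral\<^sup>L std_gauss (\<lambda>x. (?h x)\<^sup>2) / (e * real m / 4)\<^sup>2"
    using assms by (intro colsum hi h2) auto
  also have "integral\<^sup>L std_gauss (\<lambda>x. (?h x)\<^sup>2) \<le> 1"
  proof -
    have "integral\<^sup>L std_gauss (\<lambda>x. (?h x)\<^sup>2) = integral\<^sup>L std_gauss ?h"
      by (intro Bochner_Integration.integral_cong) (auto simp: indicator_def)
    also have "\<dots> = measure std_gauss {x. t < \<bar>x\<bar>}" by simp
    also have "\<dots> \<le> 1" by (rule G.prob_le_1)
    finally show ?thesis .
  qed
  then have "real m * integral\<^sup>L std_gauss (\<lambda>x. (?h x)\<^sup>2) / (e * real m / 4)\<^sup>2 \<le> real m * 1 / (e * real m / 4)\<^sup>2"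
    using assms by (intro divide_right_mono mult_left_mono) auto
  also have "real m * 1 / (e * real m / 4)\<^sup>2 = 16 / (e\<^sup>2 * real m)"
    using assms by (simp add: field_simps power2_eq_square)
  finally show ?thesis by simp
qed

lemma ev2:
  assumes "0 < n" "0 < mu" "0 < m" "0 \<le> t" "integral\<^sup>L std_gauss (ht t) = mu"
  shows "measure (gauss_matrix m n) {X \<in> space (gauss_matrix m n).
      real m * mu \<le> \<bar>(\<Sum>i<m. ht t (X (i,0))) - real m * mu\<bar>} \<le> 1 / (real m * mu\<^sup>2)"
proof -
  have h2: "integrable std_gauss (\<lambda>x. (ht t x)\<^sup>2)" using mom2 by (simp add: ht_sq)
  have "measure (gauss_matrix m n) {X \<in> space (gauss_matrix m n).
      real m * mu \<le> \<bar>(\<Sum>i<m. ht t (X (i,0))) - real m * integral\<^sup>L std_gauss (ht t)\<bar>}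
    \<le> real m * integral\<^sup>L std_gauss (\<lambda>x. (ht t x)\<^sup>2) / (real m * mu)\<^sup>2"
    using assms by (intro colsum ht_int h2) auto
  also have "integral\<^sup>L std_gauss (\<lambda>x. (ht t x)\<^sup>2) = 1" using mom2 by (simp add: ht_sq)
  finally show ?thesis using assms by (simp add: field_simps power2_eq_square)
qed

lemma ev3:
  assumes "0 < n" "0 < m"
  shows "measure (gauss_matrix m n) {X \<in> space (gauss_matrix m n).
      real m / 2 \<le> \<bar>(\<Sum>i<m. (X (i,0))\<^sup>2) - real m\<bar>} \<le> 12 / real m"
proof -
  have "measure (gauss_matrix m n) {X \<in> space (gauss_matrix m n).
      real m / 2 \<le> \<bar>(\<Sum>i<m. (X (i,0))\<^sup>2) - real m * integral\<^sup>L std_gauss (\<lambda>x. x\<^sup>2)\<bar>}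
    \<le> real m * integral\<^sup>L std_gauss (\<lambda>x. (x\<^sup>2)\<^sup>2) / (real m / 2)\<^sup>2"
    using assms mom2 mom4 by (intro colsum) auto
  then show ?thesis using assms mom2 mom4 by (simp add: field_simps power2_eq_square)
qed

definition Sfun :: "nat \<Rightarrow> nat \<Rightarrow> (nat \<times> nat \<Rightarrow> real) \<Rightarrow> real" where
  "Sfun m n X = (\<Sum>j\<in>{1..<n}. (\<Sum>i<m. X (i,0) * X (i,j))\<^sup>2)"

lemma ev4:
  assumes "0 < a"
  shows "measure (gauss_matrix m n) {X \<in> space (gauss_matrix m n). a \<le> Sfun m n X}
    \<le> real (n - 1) * real m / a"
proof -
  interpret M: prob_space "gauss_matrix m n" by (rule M_prob)
  have sq: "Sfun m n X = (\<Sum>j\<in>{1..<n}. \<Sum>i<m. \<Sum>k<m. X (i,0) * X (i,j) * (X (k,0) * X (k,j)))" for X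
    unfolding Sfun_def power2_eq_square sum_product by simp
  have t_int: "integrable (gauss_matrix m n) (\<lambda>X. X (i,0) * X (i,j) * (X (k,0) * X (k,j)))"
    and t_val: "M.expectation (\<lambda>X. X (i,0) * X (i,j) * (X (k,0) * X (k,j))) = (if i = k then 1 else 0)"
    if "j \<in> {1..<n}" "i < m" "k < m" for i j k
  proof -
    have "integrable (gauss_matrix m n) (\<lambda>X. X (i,0) * X (i,j) * (X (k,0) * X (k,j))) \<and>
      M.expectation (\<lambda>X. X (i,0) * X (i,j) * (X (k,0) * X (k,j))) = (if i = k then 1 else 0)"
    proof (cases "i = k")
      case True
      have e: "X (i,0) * X (i,j) * (X (k,0) * X (k,j)) = (\<Prod>a\<in>{(i,0),(i,j)}. X a * X a)" for X
        using True that by (simp add: algebra_simps)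
      show ?thesis unfolding e
        using prodintegrable[of "{(i,0),(i,j)}" m n "\<lambda>_ x. x * x"] prodint[of "{(i,0),(i,j)}" m n "\<lambda>_ x. x * x"]
          that True mom2 by (auto simp: power2_eq_square)
    next
      case False
      have e: "X (i,0) * X (i,j) * (X (k,0) * X (k,j)) = (\<Prod>a\<in>{(i,0),(i,j),(k,0),(k,j)}. X a)" for X
        using False that by (simp add: algebra_simps)
      show ?thesis unfolding e
        using prodintegrable[of "{(i,0),(i,j),(k,0),(k,j)}" m n "\<lambda>_ x. x"] prodint[of "{(i,0),(i,j),(k,0),(k,j)}" m n "\<lambda>_ x. x"]
          that False mom1 by auto
    qed
    then show "integrable (gauss_matrix m n) (\<lambda>X. X (i,0) * X (i,j) * (X (k,0) * X (k,j)))"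
      "M.expectation (\<lambda>X. X (i,0) * X (i,j) * (X (k,0) * X (k,j))) = (if i = k then 1 else 0)" by auto
  qed
  have intS: "integrable (gauss_matrix m n) (Sfun m n)"
    unfolding sq[abs_def] by (intro Bochner_Integration.integrable_sum t_int) auto
  have "M.expectation (Sfun m n) = (\<Sum>j\<in>{1..<n}. \<Sum>i<m. \<Sum>k<m. M.expectation (\<lambda>X. X (i,0) * X (i,j) * (X (k,0) * X (k,j))))"
  proof -
    have "M.expectation (Sfun m n) = (\<Sum>j\<in>{1..<n}. M.expectation (\<lambda>X. \<Sum>i<m. \<Sum>k<m. X (i,0) * X (i,j) * (X (k,0) * X (k,j))))"
      unfolding sq[abs_def] by (rule Bochner_Integration.integral_sum) (auto intro!: Bochner_Integration.integrable_sum t_int)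
    also have "\<dots> = (\<Sum>j\<in>{1..<n}. \<Sum>i<m. M.expectation (\<lambda>X. \<Sum>k<m. X (i,0) * X (i,j) * (X (k,0) * X (k,j))))"
      by (intro sum.cong refl Bochner_Integration.integral_sum) (auto intro!: Bochner_Integration.integrable_sum t_int)
    also have "\<dots> = (\<Sum>j\<in>{1..<n}. \<Sum>i<m. \<Sum>k<m. M.expectation (\<lambda>X. X (i,0) * X (i,j) * (X (k,0) * X (k,j))))"
      by (intro sum.cong refl Bochner_Integration.integral_sum) (auto intro!: t_int)
    finally show ?thesis .
  qed
  also have "\<dots> = (\<Sum>j\<in>{1..<n}. \<Sum>i<m. \<Sum>k<m. (if i = k then 1 else 0))"
    by (intro sum.cong refl) (simp add: t_val)
  also have "\<dots> = real (n - 1) * real m" by simp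
  finally have ES: "M.expectation (Sfun m n) = real (n - 1) * real m" .
  have nn: "AE X in gauss_matrix m n. 0 \<le> Sfun m n X" by (simp add: Sfun_def sum_nonneg)
  have "measure (gauss_matrix m n) {X \<in> space (gauss_matrix m n). a \<le> Sfun m n X} \<le> M.expectation (Sfun m n) / a"
    by (rule integral_Markov_inequality_measure[OF intS sets.top nn assms])
  then show ?thesis using ES by simp
qed



lemma t0_ge1: "1 \<le> sqrt (2 * ln 2)"
  using ln2_ge_two_thirds by (simp add: real_le_rsqrt)

lemma phi0_bounds: "phi 0 \<le> 1/2" "1/3 \<le> phi 0"
proof -
  have "phi 0 = 1 / sqrt (2 * pi)" by (simp add: phi_eq)
  moreover have "2 \<le> sqrt (2 * pi)" using pi_gt3 by (simp add: real_le_rsqrt)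
  moreover have "sqrt (2 * pi) \<le> 3"
  proof -
    have "sqrt (2 * pi) \<le> sqrt (3\<^sup>2)" using pi_less_4 by (intro real_sqrt_le_mono) simp
    then show ?thesis by simp
  qed
  ultimately show "phi 0 \<le> 1/2" "1/3 \<le> phi 0"
    using frac_le[of 1 1 2 "sqrt (2 * pi)"] frac_le[of 1 1 "sqrt (2 * pi)" 3] by auto
qed

lemma numerics:
  assumes "0 < e" "e < 0.2"
  shows "0 \<le> sqrt (2 * ln 2) - e/2" "sqrt (2 * ln 2) - e/2 \<le> sqrt (2 * ln 2)"
    "e / 6 \<le> 4 * phi (sqrt (2 * ln 2) - e/2) - 2 * phi 0"
proof -
  define t0 where "t0 = sqrt (2 * ln 2)"
  define t where "t = t0 - e/2"
  have t01: "1 \<le> t0" using t0_ge1 by (simp add: t0_def)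
  show "0 \<le> sqrt (2 * ln 2) - e/2" using t01 assms unfolding t0_def by linarith
  show "sqrt (2 * ln 2) - e/2 \<le> sqrt (2 * ln 2)" using assms by simp
  have t0sq: "t0\<^sup>2 = 2 * ln 2" by (simp add: t0_def)
  have "t\<^sup>2 = t0\<^sup>2 - e * t0 + e\<^sup>2/4" by (simp add: t_def power2_eq_square algebra_simps)
  also have "\<dots> \<le> t0\<^sup>2 - e/2"
  proof -
    have "e \<le> e * t0" using t01 assms by simp
    moreover have "e\<^sup>2/4 \<le> e/2" using assms by (simp add: power2_eq_square)
    ultimately show ?thesis by simp
  qed
  finally have tsq: "t\<^sup>2 \<le> 2 * ln 2 - e/2" using t0sq by simp
  have ea: "exp (- ln 2 + e/4) \<le> exp (- t\<^sup>2 / 2)" using tsq by simp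
  have eb: "exp (- ln 2 + e/4) = exp (e/4) / 2"
  proof -
    have "exp (- ln 2 + e/4) = exp (- ln 2) * exp (e/4)" by (rule exp_add)
    moreover have "exp (- ln (2::real)) = 1/2" by (simp add: exp_minus)
    ultimately show ?thesis by simp
  qed
  have ec: "1 + e/4 \<le> exp (e/4)" by (rule exp_ge_add_one_self)
  have ed: "(1 + e/4) / 2 \<le> exp (e/4) / 2" by (rule divide_right_mono[OF ec]) simp
  have ex: "exp (- t\<^sup>2 / 2) \<ge> (1 + e/4) / 2" using ea ed unfolding eb by (rule order.trans[rotated])
  have "phi t = phi 0 * exp (- t\<^sup>2 / 2)" by (simp add: phi_eq)
  then have "4 * phi t - 2 * phi 0 = 2 * phi 0 * (2 * exp (- t\<^sup>2 / 2) - 1)" by (simp add: algebra_simps)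
  also have "\<dots> \<ge> 2 * (1/3) * (e/4)"
    using phi0_bounds(2) ex assms by (intro mult_mono) auto
  finally show "e / 6 \<le> 4 * phi (sqrt (2 * ln 2) - e/2) - 2 * phi 0" by (simp add: t_def t0_def)
qed



definition e0v :: "(nat \<Rightarrow> real) \<Rightarrow> nat \<Rightarrow> real" where
  "e0v w j = w j + (if j = 0 then 1 else 0)"

lemma matvec_e0v:
  assumes "0 < n"
  shows "matvec n X (e0v w) i = matvec n X w i + X (i, 0)"
proof -
  have "matvec n X (e0v w) i = (\<Sum>j<n. X (i,j) * w j + (if j = 0 then X (i,j) else 0))"
    unfolding matvec_def e0v_def by (intro sum.cong) (auto simp: algebra_simps)
  also have "\<dots> = (\<Sum>j<n. X (i,j) * w j) + (\<Sum>j<n. if j = 0 then X (i,j) else 0)"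
    by (rule sum.distrib)
  also have "(\<Sum>j<n. if j = 0 then X (i,j) else 0) = X (i, 0)"
    using assms by (simp add: sum.delta)
  finally show ?thesis by (simp add: matvec_def)
qed

lemma part1:
  assumes n: "0 < n" and t: "0 \<le> t"
    and N: "(\<Sum>i<m. indicator {x. t < \<bar>x\<bar>} (X (i,0))) < eta * real m"
    and H: "0 < (\<Sum>i<m. ht t (X (i,0)))"
  shows "\<exists>\<zeta>. real (l0norm m \<zeta>) \<le> eta * real m \<and>
                  \<not> is_l1_minimizer m n X (\<lambda>i. matvec n X wstar i + \<zeta> i) wstar"
proof -
  define z where "z i = (if t < \<bar>X (i,0)\<bar> then 2 * X (i,0) else 0)" for i
  have "l0norm m z = card {i. i < m \<and> t < \<bar>X (i,0)\<bar>}"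
    unfolding l0norm_def z_def using t by (intro arg_cong[where f=card]) auto
  also have "real (card {i. i < m \<and> t < \<bar>X (i,0)\<bar>}) = (\<Sum>i<m. indicator {x. t < \<bar>x\<bar>} (X (i,0)))"
  proof -
    have "(\<Sum>i<m. indicator {x. t < \<bar>x\<bar>} (X (i,0)) :: real) = (\<Sum>i\<in>{..<m}. if i \<in> {i. t < \<bar>X (i,0)\<bar>} then 1 else 0)"
      by (intro sum.cong refl) (auto simp: indicator_def)
    also have "\<dots> = (\<Sum>i\<in>{..<m} \<inter> {i. t < \<bar>X (i,0)\<bar>}. 1)"
      by (rule sum.inter_restrict[symmetric]) simp
    also have "\<dots> = real (card ({..<m} \<inter> {i. t < \<bar>X (i,0)\<bar>}))" by (rule real_of_card[symmetric])
    also have "{..<m} \<inter> {i. t < \<bar>X (i,0)\<bar>} = {i. i < m \<and> t < \<bar>X (i,0)\<bar>}" by auto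
    finally show ?thesis by simp
  qed
  finally have l0: "real (l0norm m z) \<le> eta * real m" using N by simp
  have notmin: "\<not> is_l1_minimizer m n X (\<lambda>i. matvec n X wstar i + z i) wstar"
  proof
    assume "is_l1_minimizer m n X (\<lambda>i. matvec n X wstar i + z i) wstar"
    then have le: "l1_obj m n X (\<lambda>i. matvec n X wstar i + z i) wstar \<le> l1_obj m n X (\<lambda>i. matvec n X wstar i + z i) (e0v wstar)"
      unfolding is_l1_minimizer_def by blast
    have o1: "l1_obj m n X (\<lambda>i. matvec n X wstar i + z i) wstar = (\<Sum>i<m. \<bar>z i\<bar>)"
      by (simp add: l1_obj_def l1norm_def)
    have o2: "l1_obj m n X (\<lambda>i. matvec n X wstar i + z i) (e0v wstar) = (\<Sum>i<m. \<bar>z i - X (i,0)\<bar>)"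
      by (simp add: l1_obj_def l1norm_def matvec_e0v[OF n])
    have "(\<Sum>i<m. \<bar>z i - X (i,0)\<bar>) = (\<Sum>i<m. \<bar>z i\<bar> - ht t (X (i,0)))"
      by (intro sum.cong) (auto simp: z_def ht_def)
    also have "\<dots> = (\<Sum>i<m. \<bar>z i\<bar>) - (\<Sum>i<m. ht t (X (i,0)))" by (simp add: sum_subtractf)
    finally show False using le o1 o2 H by simp
  qed
  show ?thesis using l0 notmin by blast
qed

lemma part2:
  assumes n: "0 < n" and m: "0 < m"
    and Q1: "real m / 2 < (\<Sum>i<m. (X (i,0))\<^sup>2)" and Q2: "(\<Sum>i<m. (X (i,0))\<^sup>2) < 3 * real m / 2"
    and S: "Sfun m n X \<le> (real m)\<^sup>2 / 32"
  shows "\<exists>d. (\<exists>i<m. d i \<noteq> 0) \<and>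
              (\<forall>what. is_l1_minimizer m n X (\<lambda>i. matvec n X wstar i + d i) what \<longrightarrow>
                 l2norm n (\<lambda>j. what j - wstar j) \<ge> 1/8 * l1norm m d / real m)"
proof -
  define d where "d i = X (i,0)" for i
  define Q where "Q = (\<Sum>i<m. (X (i,0))\<^sup>2)"
  have dnz: "\<exists>i<m. d i \<noteq> 0"
  proof (rule ccontr)
    assume "\<not> (\<exists>i<m. d i \<noteq> 0)"
    then have "Q = 0" by (simp add: Q_def d_def)
    then show False using Q1 m by (simp add: Q_def)
  qed
  have "1/8 * l1norm m d / real m \<le> l2norm n (\<lambda>j. what j - wstar j)"
    if mini: "is_l1_minimizer m n X (\<lambda>i. matvec n X wstar i + d i) what" for what
  proof -
    define u where "u j = what j - wstar j" for j
    have "l1_obj m n X (\<lambda>i. matvec n X wstar i + d i) what \<le> l1_obj m n X (\<lambda>i. matvec n X wstar i + d i) (e0v wstar)"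
      using mini unfolding is_l1_minimizer_def by blast
    also have "l1_obj m n X (\<lambda>i. matvec n X wstar i + d i) (e0v wstar) = 0"
      by (simp add: l1_obj_def l1norm_def matvec_e0v[OF n] d_def)
    finally have "(\<Sum>i<m. \<bar>matvec n X wstar i + d i - matvec n X what i\<bar>) \<le> 0"
      by (simp add: l1_obj_def l1norm_def)
    then have "(\<Sum>i<m. \<bar>matvec n X wstar i + d i - matvec n X what i\<bar>) = 0"
      by (meson order_antisym sum_nonneg abs_ge_zero)
    then have zero: "\<bar>matvec n X wstar i + d i - matvec n X what i\<bar> = 0" if "i < m" for i
      using that by (subst (asm) sum_nonneg_eq_0_iff) auto
    have eq: "(\<Sum>j<n. X (i,j) * u j) = X (i,0)" if "i < m" for i
    proof -
      have "(\<Sum>j<n. X (i,j) * u j) = matvec n X what i - matvec n X wstar i"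
        by (simp add: u_def matvec_def right_diff_distrib sum_subtractf)
      then show ?thesis using zero[OF that] by (simp add: d_def)
    qed
    define Gm where "Gm j = (\<Sum>i<m. X (i,0) * X (i,j))" for j
    have "Q = (\<Sum>i<m. X (i,0) * (\<Sum>j<n. X (i,j) * u j))"
      unfolding Q_def by (intro sum.cong refl) (simp add: eq power2_eq_square)
    also have "\<dots> = (\<Sum>j<n. u j * Gm j)"
      unfolding Gm_def sum_distrib_left sum_distrib_right
      by (subst sum.swap) (intro sum.cong refl, simp add: algebra_simps)
    finally have QG: "Q = (\<Sum>j<n. u j * Gm j)" .
    have G0: "Gm 0 = Q" by (simp add: Gm_def Q_def power2_eq_square)
    have "(\<Sum>j<n. (Gm j)\<^sup>2) = (Gm 0)\<^sup>2 + (\<Sum>j\<in>{1..<n}. (Gm j)\<^sup>2)"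
    proof -
      have "{..<n} = insert 0 {1..<n}" using n by auto
      then show ?thesis by simp
    qed
    also have "(\<Sum>j\<in>{1..<n}. (Gm j)\<^sup>2) = Sfun m n X" by (simp add: Sfun_def Gm_def)
    finally have GS: "(\<Sum>j<n. (Gm j)\<^sup>2) = Q\<^sup>2 + Sfun m n X" using G0 by simp
    have CS: "Q\<^sup>2 \<le> (\<Sum>j<n. (u j)\<^sup>2) * (Q\<^sup>2 + Sfun m n X)"
      using Cauchy_Schwarz_ineq_sum[of u Gm "{..<n}"] QG GS by simp
    have Qpos: "real m / 2 < Q" "Q < 3 * real m / 2" using Q1 Q2 by (auto simp: Q_def)
    have "Q\<^sup>2 + Sfun m n X \<le> 4 * (real m)\<^sup>2"
    proof -
      have "Q\<^sup>2 \<le> (3 * real m / 2)\<^sup>2" using Qpos m by (intro power_mono) auto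
      moreover have "(3 * real m / 2)\<^sup>2 = 9/4 * (real m)\<^sup>2" by (simp add: field_simps power2_eq_square)
      ultimately have "Q\<^sup>2 \<le> 9/4 * (real m)\<^sup>2" by simp
      moreover have "0 \<le> (real m)\<^sup>2" by simp
      ultimately show ?thesis using S by linarith
    qed
    then have "Q\<^sup>2 \<le> (\<Sum>j<n. (u j)\<^sup>2) * (4 * (real m)\<^sup>2)"
      using CS by (meson order_trans mult_left_mono sum_nonneg zero_le_power2)
    moreover have "(real m / 2)\<^sup>2 \<le> Q\<^sup>2" using Qpos m by (intro power_mono) auto
    ultimately have "(real m)\<^sup>2 / 4 \<le> (\<Sum>j<n. (u j)\<^sup>2) * (4 * (real m)\<^sup>2)"
      by (simp add: power_divide)
    then have U: "1/16 \<le> (\<Sum>j<n. (u j)\<^sup>2)"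
      using m by (simp add: field_simps power2_eq_square)
    have "(l1norm m d)\<^sup>2 = (\<Sum>i<m. 1 * \<bar>d i\<bar>)\<^sup>2" by (simp add: l1norm_def)
    also have "\<dots> \<le> (\<Sum>i<m. 1\<^sup>2) * (\<Sum>i<m. \<bar>d i\<bar>\<^sup>2)" by (rule Cauchy_Schwarz_ineq_sum)
    also have "\<dots> = real m * Q" by (simp add: Q_def d_def)
    also have "\<dots> \<le> real m * (3 * real m / 2)" using Qpos by simp
    finally have L: "(l1norm m d)\<^sup>2 \<le> 3/2 * (real m)\<^sup>2" by (simp add: power2_eq_square)
    have l1nn: "0 \<le> l1norm m d" by (simp add: l1norm_def sum_nonneg)
    have "(1/8 * l1norm m d / real m)\<^sup>2 = (l1norm m d)\<^sup>2 / (64 * (real m)\<^sup>2)"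
      by (simp add: power_divide power_mult_distrib power2_eq_square)
    also have "\<dots> \<le> (3/2 * (real m)\<^sup>2) / (64 * (real m)\<^sup>2)"
      using L m by (intro divide_right_mono) auto
    also have "\<dots> \<le> 1/16" using m by simp
    also have "\<dots> \<le> (\<Sum>j<n. (u j)\<^sup>2)" by (rule U)
    finally have "(1/8 * l1norm m d / real m)\<^sup>2 \<le> (\<Sum>j<n. (u j)\<^sup>2)" .
    then have "sqrt ((1/8 * l1norm m d / real m)\<^sup>2) \<le> sqrt (\<Sum>j<n. (u j)\<^sup>2)"
      by (rule real_sqrt_le_mono)
    then show ?thesis using l1nn m by (simp add: l2norm_def u_def)
  qed
  then show ?thesis using dnz by blast
qed



lemma main:
  fixes \<delta> \<epsilon> \<eta> :: real and n m :: nat and wstar :: "nat \<Rightarrow> real"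
  assumes \<delta>: "0 < \<delta>" and e0: "0 < \<epsilon>" and e1: "\<epsilon> < 0.2" and n1: "1 \<le> n"
    and mC: "real m \<ge> 128 / \<delta> * real n / \<epsilon>\<^sup>2"
  shows "\<exists>A \<in> sets (gauss_matrix m n).
        measure (gauss_matrix m n) A \<ge> 1 - \<delta> \<and>
        (\<forall>X\<in>A.
           (\<eta> > eta0 + \<epsilon> \<longrightarrow>
              (\<exists>\<zeta>. real (l0norm m \<zeta>) \<le> \<eta> * real m \<and>
                  \<not> is_l1_minimizer m n X (\<lambda>i. matvec n X wstar i + \<zeta> i) wstar)) \<and>
           (\<exists>d. (\<exists>i<m. d i \<noteq> 0) \<and>
              (\<forall>what. is_l1_minimizer m n X (\<lambda>i. matvec n X wstar i + d i) what \<longrightarrow>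
                 l2norm n (\<lambda>j. what j - wstar j) \<ge> 1/8 * l1norm m d / real m)))"
proof -
  let ?M = "gauss_matrix m n"
  interpret M: prob_space ?M by (rule M_prob)
  define t0 where "t0 = sqrt (2 * ln 2)"
  define t where "t = t0 - \<epsilon>/2"
  define p where "p = measure std_gauss {x. t < \<bar>x\<bar>}"
  define mu where "mu = 4 * phi t - 2 * phi 0"
  have n0: "0 < n" using n1 by simp
  have tnn: "0 \<le> t" and tt0: "t \<le> t0" and mu_lb: "\<epsilon> / 6 \<le> mu"
    using numerics[OF e0 e1] by (simp_all add: t_def t0_def mu_def)
  have mu_pos: "0 < mu" using mu_lb e0 by simp
  have mu_eq: "integral\<^sup>L std_gauss (ht t) = mu" using ht_mean[OF tnn] by (simp add: mu_def)
  have p_le: "p \<le> eta0 + \<epsilon>/2"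
  proof -
    have "p \<le> 2 * (1 - Phi t0) + 2 * (t0 - t) * phi 0"
      unfolding p_def by (rule tail_bound[OF tnn tt0])
    also have "2 * (t0 - t) * phi 0 = \<epsilon> * phi 0" by (simp add: t_def)
    also have "\<epsilon> * phi 0 \<le> \<epsilon> * (1/2)" using phi0_bounds(1) e0 by (intro mult_left_mono) auto
    finally show ?thesis by (simp add: eta0_def t0_def)
  qed
  have e2pos: "0 < \<epsilon>\<^sup>2" using e0 by simp
  have e2le: "\<epsilon>\<^sup>2 \<le> 1" using e0 e1 by (simp add: power2_eq_square mult_le_one)
  have K1: "128 * real n / \<delta> \<le> real m * \<epsilon>\<^sup>2"
  proof -
    have "128 / \<delta> * real n / \<epsilon>\<^sup>2 * \<epsilon>\<^sup>2 \<le> real m * \<epsilon>\<^sup>2"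
      by (rule mult_right_mono[OF mC]) simp
    moreover have "128 / \<delta> * real n / \<epsilon>\<^sup>2 * \<epsilon>\<^sup>2 = 128 * real n / \<delta>" using e2pos by simp
    ultimately show ?thesis by simp
  qed
  have K0: "128 / \<delta> \<le> real m * \<epsilon>\<^sup>2"
  proof -
    have "128 / \<delta> \<le> 128 * real n / \<delta>" using n1 \<delta> by (simp add: divide_right_mono)
    then show ?thesis using K1 by linarith
  qed
  have mpos: "0 < real m"
  proof -
    have "0 < 128 / \<delta>" using \<delta> by simp
    then have "0 < real m * \<epsilon>\<^sup>2" using K0 by linarith
    then show ?thesis using e2pos by (simp add: zero_less_mult_iff)
  qed
  then have m0: "0 < m" by simp
  have me: "real m * \<epsilon>\<^sup>2 \<le> real m" using e2le mpos by (simp add: mult_left_le)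
  have K2: "128 * real n / \<delta> \<le> real m" using K1 me by linarith
  have K3: "128 / \<delta> \<le> real m" using K0 me by linarith

  define B1 where "B1 = {X \<in> space ?M. \<epsilon> * real m / 4 \<le> \<bar>(\<Sum>i<m. indicator {x. t < \<bar>x\<bar>} (X (i,0))) - real m * p\<bar>}"
  define B2 where "B2 = {X \<in> space ?M. real m * mu \<le> \<bar>(\<Sum>i<m. ht t (X (i,0))) - real m * mu\<bar>}"
  define B3 where "B3 = {X \<in> space ?M. real m / 2 \<le> \<bar>(\<Sum>i<m. (X (i,0))\<^sup>2) - real m\<bar>}"
  define B4 where "B4 = {X \<in> space ?M. 4 * real n * real m / \<delta> \<le> Sfun m n X}"
  have B1s: "B1 \<in> sets ?M" unfolding B1_def by measurable
  have B2s: "B2 \<in> sets ?M" unfolding B2_def by measurable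
  have B3s: "B3 \<in> sets ?M" unfolding B3_def by measurable
  have B4s: "B4 \<in> sets ?M" unfolding B4_def Sfun_def by measurable

  have P1: "measure ?M B1 \<le> \<delta> / 8"
  proof -
    have "measure ?M B1 \<le> 16 / (\<epsilon>\<^sup>2 * real m)" unfolding B1_def p_def using ev1[OF n0 e0 m0] by simp
    also have "\<dots> \<le> \<delta> / 8" using K0 \<delta> e2pos mpos by (simp add: field_simps)
    finally show ?thesis .
  qed
  have P2: "measure ?M B2 \<le> 36 * \<delta> / 128"
  proof -
    have "measure ?M B2 \<le> 1 / (real m * mu\<^sup>2)" unfolding B2_def using ev2[OF n0 mu_pos m0 tnn mu_eq] by simp
    also have "\<dots> \<le> 1 / (real m * (\<epsilon>/6)\<^sup>2)"
      using mu_lb e0 mpos by (intro divide_left_mono mult_left_mono power_mono mult_pos_pos) auto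
    also have "\<dots> = 36 / (real m * \<epsilon>\<^sup>2)" by (simp add: power_divide)
    also have "\<dots> \<le> 36 * \<delta> / 128" using K0 \<delta> e2pos mpos by (simp add: field_simps)
    finally show ?thesis .
  qed
  have P3: "measure ?M B3 \<le> 12 * \<delta> / 128"
  proof -
    have "measure ?M B3 \<le> 12 / real m" unfolding B3_def using ev3[OF n0 m0] by simp
    also have "\<dots> \<le> 12 * \<delta> / 128" using K3 \<delta> mpos by (simp add: field_simps)
    finally show ?thesis .
  qed
  have P4: "measure ?M B4 \<le> \<delta> / 4"
  proof -
    have a4: "0 < 4 * real n * real m / \<delta>" using n0 mpos \<delta> by simp
    have "measure ?M B4 \<le> real (n - 1) * real m / (4 * real n * real m / \<delta>)" unfolding B4_def by (rule ev4[OF a4])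
    also have "\<dots> \<le> real n * real m / (4 * real n * real m / \<delta>)"
      using a4 mpos by (intro divide_right_mono mult_right_mono) auto
    also have "\<dots> = \<delta> / 4" using n0 mpos \<delta> by (simp add: field_simps)
    finally show ?thesis .
  qed
  define A where "A = space ?M - (B1 \<union> B2 \<union> B3 \<union> B4)"
  have As: "A \<in> sets ?M" unfolding A_def using B1s B2s B3s B4s by auto
  have "measure ?M (B1 \<union> B2 \<union> B3 \<union> B4) \<le> measure ?M B1 + measure ?M B2 + measure ?M B3 + measure ?M B4"
  proof -
    have "measure ?M (B1 \<union> B2 \<union> B3 \<union> B4) \<le> measure ?M (B1 \<union> B2 \<union> B3) + measure ?M B4"
      using B1s B2s B3s B4s by (intro measure_Un_le) auto
    moreover have "measure ?M (B1 \<union> B2 \<union> B3) \<le> measure ?M (B1 \<union> B2) + measure ?M B3"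
      using B1s B2s B3s by (intro measure_Un_le) auto
    moreover have "measure ?M (B1 \<union> B2) \<le> measure ?M B1 + measure ?M B2"
      using B1s B2s by (intro measure_Un_le) auto
    ultimately show ?thesis by linarith
  qed
  then have "measure ?M (B1 \<union> B2 \<union> B3 \<union> B4) \<le> \<delta>/8 + 36 * \<delta> / 128 + 12 * \<delta> / 128 + \<delta>/4"
    using P1 P2 P3 P4 by linarith
  moreover have "measure ?M A = 1 - measure ?M (B1 \<union> B2 \<union> B3 \<union> B4)"
    unfolding A_def using B1s B2s B3s B4s by (intro M.prob_compl) auto
  ultimately have PA: "1 - \<delta> \<le> measure ?M A" using \<delta> by linarith

  have good: "(\<eta> > eta0 + \<epsilon> \<longrightarrow>
              (\<exists>\<zeta>. real (l0norm m \<zeta>) \<le> \<eta> * real m \<and>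
                  \<not> is_l1_minimizer m n X (\<lambda>i. matvec n X wstar i + \<zeta> i) wstar)) \<and>
           (\<exists>d. (\<exists>i<m. d i \<noteq> 0) \<and>
              (\<forall>what. is_l1_minimizer m n X (\<lambda>i. matvec n X wstar i + d i) what \<longrightarrow>
                 l2norm n (\<lambda>j. what j - wstar j) \<ge> 1/8 * l1norm m d / real m))"
    if XA: "X \<in> A" for X
  proof
    have Xs: "X \<in> space ?M" using XA by (simp add: A_def)
    have nB1: "\<bar>(\<Sum>i<m. indicator {x. t < \<bar>x\<bar>} (X (i,0))) - real m * p\<bar> < \<epsilon> * real m / 4"
      using XA Xs by (auto simp: A_def B1_def)
    have nB2: "\<bar>(\<Sum>i<m. ht t (X (i,0))) - real m * mu\<bar> < real m * mu"
      using XA Xs by (auto simp: A_def B2_def)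
    have nB3: "\<bar>(\<Sum>i<m. (X (i,0))\<^sup>2) - real m\<bar> < real m / 2"
      using XA Xs by (auto simp: A_def B3_def)
    have nB4: "Sfun m n X < 4 * real n * real m / \<delta>"
      using XA Xs by (auto simp: A_def B4_def)
    show "\<eta> > eta0 + \<epsilon> \<longrightarrow>
              (\<exists>\<zeta>. real (l0norm m \<zeta>) \<le> \<eta> * real m \<and>
                  \<not> is_l1_minimizer m n X (\<lambda>i. matvec n X wstar i + \<zeta> i) wstar)"
    proof
      assume eta: "\<eta> > eta0 + \<epsilon>"
      have s1: "(\<Sum>i<m. indicator {x. t < \<bar>x\<bar>} (X (i,0))) - real m * p < \<epsilon> * real m / 4"
        using nB1 by (rule le_less_trans[OF abs_ge_self])
      have s2: "real m * p \<le> real m * (eta0 + \<epsilon>/2)" using p_le mpos by (intro mult_left_mono) auto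
      have s3: "real m * (eta0 + \<epsilon>/2) + \<epsilon> * real m / 4 = real m * (eta0 + 3 * \<epsilon> / 4)"
        by (simp add: algebra_simps)
      have s4: "real m * (eta0 + 3 * \<epsilon> / 4) < real m * \<eta>" using eta e0 mpos by (intro mult_strict_left_mono) auto
      have "(\<Sum>i<m. indicator {x. t < \<bar>x\<bar>} (X (i,0))) < real m * \<eta>"
        using s1 s2 s3 s4 by linarith
      then have N: "(\<Sum>i<m. indicator {x. t < \<bar>x\<bar>} (X (i,0))) < \<eta> * real m"
        by (simp add: mult.commute)
      have H: "0 < (\<Sum>i<m. ht t (X (i,0)))" using nB2 by (simp add: abs_less_iff)
      show "\<exists>\<zeta>. real (l0norm m \<zeta>) \<le> \<eta> * real m \<and>
                  \<not> is_l1_minimizer m n X (\<lambda>i. matvec n X wstar i + \<zeta> i) wstar"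
        by (rule part1[OF n0 tnn N H])
    qed
    have Q1: "real m / 2 < (\<Sum>i<m. (X (i,0))\<^sup>2)" and Q2: "(\<Sum>i<m. (X (i,0))\<^sup>2) < 3 * real m / 2"
    proof -
      have "(\<Sum>i<m. (X (i,0))\<^sup>2) - real m < real m / 2 \<and> - ((\<Sum>i<m. (X (i,0))\<^sup>2) - real m) < real m / 2"
        using nB3 by (simp only: abs_less_iff)
      then show "real m / 2 < (\<Sum>i<m. (X (i,0))\<^sup>2)" "(\<Sum>i<m. (X (i,0))\<^sup>2) < 3 * real m / 2" by linarith+
    qed
    have "4 * real n * real m / \<delta> = (real m / 32) * (128 * real n / \<delta>)" by (simp add: field_simps)
    also have "\<dots> \<le> (real m / 32) * real m" using K2 mpos by (intro mult_left_mono) auto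
    finally have S: "Sfun m n X \<le> (real m)\<^sup>2 / 32" using nB4 by (simp add: power2_eq_square)
    show "\<exists>d. (\<exists>i<m. d i \<noteq> 0) \<and>
              (\<forall>what. is_l1_minimizer m n X (\<lambda>i. matvec n X wstar i + d i) what \<longrightarrow>
                 l2norm n (\<lambda>j. what j - wstar j) \<ge> 1/8 * l1norm m d / real m)"
      by (rule part2[OF n0 m0 Q1 Q2 S])
  qed
  show ?thesis using As PA good by blast
qed


theorem theorem6p1:
  "\<exists>c>0. \<forall>\<delta>>0. \<exists>C>0. \<forall>(n::nat) (m::nat) (\<epsilon>::real) (\<eta>::real) (wstar::nat \<Rightarrow> real).
     0 < \<epsilon> \<longrightarrow> \<epsilon> < 0.2 \<longrightarrow> 1 \<le> n \<longrightarrow> real m \<ge> C * real n / \<epsilon>\<^sup>2 \<longrightarrow>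
     (\<exists>j<n. wstar j \<noteq> 0) \<longrightarrow>
     (\<exists>A \<in> sets (gauss_matrix m n).
        measure (gauss_matrix m n) A \<ge> 1 - \<delta> \<and>
        (\<forall>X\<in>A.
           (\<eta> > eta0 + \<epsilon> \<longrightarrow>
              (\<exists>\<zeta>. real (l0norm m \<zeta>) \<le> \<eta> * real m \<and>
                  \<not> is_l1_minimizer m n X (\<lambda>i. matvec n X wstar i + \<zeta> i) wstar)) \<and>
           (\<exists>d. (\<exists>i<m. d i \<noteq> 0) \<and>
              (\<forall>what. is_l1_minimizer m n X (\<lambda>i. matvec n X wstar i + d i) what \<longrightarrow>
                 l2norm n (\<lambda>j. what j - wstar j) \<ge> c * l1norm m d / real m))))"
  proof -
  have "\<forall>\<delta>>0. \<exists>C>0. \<forall>(n::nat) (m::nat) (\<epsilon>::real) (\<eta>::real) (wstar::nat \<Rightarrow> real).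
     0 < \<epsilon> \<longrightarrow> \<epsilon> < 0.2 \<longrightarrow> 1 \<le> n \<longrightarrow> real m \<ge> C * real n / \<epsilon>\<^sup>2 \<longrightarrow>
     (\<exists>j<n. wstar j \<noteq> 0) \<longrightarrow>
     (\<exists>A \<in> sets (gauss_matrix m n).
        measure (gauss_matrix m n) A \<ge> 1 - \<delta> \<and>
        (\<forall>X\<in>A.
           (\<eta> > eta0 + \<epsilon> \<longrightarrow>
              (\<exists>\<zeta>. real (l0norm m \<zeta>) \<le> \<eta> * real m \<and>
                  \<not> is_l1_minimizer m n X (\<lambda>i. matvec n X wstar i + \<zeta> i) wstar)) \<and>
           (\<exists>d. (\<exists>i<m. d i \<noteq> 0) \<and>
              (\<forall>what. is_l1_minimizer m n X (\<lambda>i. matvec n X wstar i + d i) what \<longrightarrow>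
                 l2norm n (\<lambda>j. what j - wstar j) \<ge> 1/8 * l1norm m d / real m))))"
  proof (intro allI impI)
    fix \<delta> :: real assume \<delta>: "0 < \<delta>"
    show "\<exists>C>0. \<forall>(n::nat) (m::nat) (\<epsilon>::real) (\<eta>::real) (wstar::nat \<Rightarrow> real).
     0 < \<epsilon> \<longrightarrow> \<epsilon> < 0.2 \<longrightarrow> 1 \<le> n \<longrightarrow> real m \<ge> C * real n / \<epsilon>\<^sup>2 \<longrightarrow>
     (\<exists>j<n. wstar j \<noteq> 0) \<longrightarrow>
     (\<exists>A \<in> sets (gauss_matrix m n).
        measure (gauss_matrix m n) A \<ge> 1 - \<delta> \<and>
        (\<forall>X\<in>A.
           (\<eta> > eta0 + \<epsilon> \<longrightarrow>
              (\<exists>\<zeta>. real (l0norm m \<zeta>) \<le> \<eta> * real m \<and>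
                  \<not> is_l1_minimizer m n X (\<lambda>i. matvec n X wstar i + \<zeta> i) wstar)) \<and>
           (\<exists>d. (\<exists>i<m. d i \<noteq> 0) \<and>
              (\<forall>what. is_l1_minimizer m n X (\<lambda>i. matvec n X wstar i + d i) what \<longrightarrow>
                 l2norm n (\<lambda>j. what j - wstar j) \<ge> 1/8 * l1norm m d / real m))))"
    proof (rule exI[where x="128 / \<delta>"], intro conjI allI impI)
      show "0 < 128 / \<delta>" using \<delta> by simp
    next
      fix n m :: nat and \<epsilon> \<eta> :: real and wstar :: "nat \<Rightarrow> real"
      assume "0 < \<epsilon>" "\<epsilon> < 0.2" "1 \<le> n" "real m \<ge> 128 / \<delta> * real n / \<epsilon>\<^sup>2"
      then show "\<exists>A \<in> sets (gauss_matrix m n).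
        measure (gauss_matrix m n) A \<ge> 1 - \<delta> \<and>
        (\<forall>X\<in>A.
           (\<eta> > eta0 + \<epsilon> \<longrightarrow>
              (\<exists>\<zeta>. real (l0norm m \<zeta>) \<le> \<eta> * real m \<and>
                  \<not> is_l1_minimizer m n X (\<lambda>i. matvec n X wstar i + \<zeta> i) wstar)) \<and>
           (\<exists>d. (\<exists>i<m. d i \<noteq> 0) \<and>
              (\<forall>what. is_l1_minimizer m n X (\<lambda>i. matvec n X wstar i + d i) what \<longrightarrow>
                 l2norm n (\<lambda>j. what j - wstar j) \<ge> 1/8 * l1norm m d / real m)))"
        using main[OF \<delta>] by blast
    qed
  qed
  then show ?thesis by (intro exI[where x="1/8::real"]) simp
qed

end
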